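(* Let $(E,\langle\cdot,\cdot\rangle,\rho,\circ)$ be a pre-Courant algebroid over $M$ with Jacobiator $J$. Consider the complex $V_1=\Gamma(\operatorname{Ker}(\rho))\xrightarrow{\ i\ }V_0=\Gamma(E)$ with $i$ the inclusion, define $l_2(e_1,e_2)=e_1\circ e_2$ for $e_1,e_2\in\Gamma(E)$, $l_2(e,\kappa)=e\circ\kappa$ and $l_2(\kappa,e)=\kappa\circ e$ for $e\in\Gamma(E)$, $\kappa\in\Gamma(\operatorname{Ker}\rho)$, and $l_3(e_1,e_2,e_3)=J(e_1,e_2,e_3)$. Then $(V_1\xrightarrow{i}V_0,l_2,l_3)$ is a Leibniz 2-algebra.
   Context: A Courant vector bundle over a smooth manifold $M$ is a vector bundle $E\to M$ with a fibrewise nondegenerate symmetric bilinear form $\langle\cdot,\cdot\rangle$ and a bundle map $\rho:E\to TM$ such that $\rho\circ\rho^*=0$, where $\rho^*:T^*M\to E^*\cong E$ is the dual of $\rho$ followed by the identification $E^*\cong E$ via $\langle\cdot,\cdot\rangle$. A pre-Courant algebroid structure on it is an $\mathbb R$-bilinear operation $\circ$ on $\Gamma(E)$ such that for all $e_1,e_2,e_3\in\Gamma(E)$: (i) $\rho(e_1\circ e_2)=[\rho(e_1),\rho(e_2)]$; (ii) $\langle e_1\circ e_1,e_2\rangle=\frac12\rho(e_2)\langle e_1,e_1\rangle$; (iii) $\rho(e_1)\langle e_2,e_3\rangle=\langle e_1\circ e_2,e_3\rangle+\langle e_2,e_1\circ e_3\rangle$. The Jacobiator is $J(e_1,e_2,e_3)=e_1\circ(e_2\circ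 e_3)-(e_1\circ e_2)\circ e_3-e_2\circ(e_1\circ e_3)$. A Leibniz 2-algebra consists of a complex of vector spaces $V_1\xrightarrow{d}V_0$, a bilinear map $l_2:V_i\times V_j\to V_{i+j}$ for $i+j\le1$, and a trilinear map $l_3:V_0\times V_0\times V_0\to V_1$ such that for all $w,x,y,z\in V_0$, $m,n\in V_1$: (a1) $d\,l_2(x,m)=l_2(x,dm)$; (a2) $d\,l_2(m,x)=l_2(dm,x)$; (a3) $l_2(dm,n)=l_2(m,dn)$; (b1) $d\,l_3(x,y,z)=l_2(x,l_2(y,z))-l_2(l_2(x,y),z)-l_2(y,l_2(x,z))$; (b2) $l_3(x,y,dm)=l_2(x,l_2(y,m))-l_2(l_2(x,y),m)-l_2(y,l_2(x,m))$; (b3) $l_3(x,dm,y)=l_2(x,l_2(m,y))-l_2(l_2(x,m),y)-l_2(m,l_2(x,y))$; (b4) $l_3(dm,x,y)=l_2(m,l_2(x,y))-l_2(l_2(m,x),y)-l_2(x,l_2(m,y))$; (c) $l_2(w,l_3(x,y,z))-l_2(x,l_3(w,y,z))+l_2(y,l_3(w,x,z))+l_2(l_3(w,x,y),z)-l_3(l_2(w,x),y,z)-l_3(x,l_2(w,y),z)-l_3(x,y,l_2(w,z))+l_3(w,l_2(x,y),z)+l_3(w,y,l_2(x,z))-l_3(w,x,l_2(y,z))=0$. *)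

theory Defs
  imports Complex_Main
begin

text \<open>
  The smooth manifold M is represented through its algebra of smooth functions,
  a commutative real algebra of type 'a (playing the role of C^\<infinity>(M)).
  Vector fields on M are represented as derivations of this algebra
  (X(M) = Der(C^\<infinity>(M))), with the Lie bracket given by the commutator.
  The space of sections Gamma(E) is a real vector space of type 'e, which is a
  module over the function algebra via sm.
\<close>

definition is_derivation :: "('a::{comm_ring_1,real_algebra_1} \<Rightarrow> 'a) \<Rightarrow> bool" where
  "is_derivation X \<longleftrightarrow>
     (\<forall>r f g. X (r *\<^sub>R f + g) = r *\<^sub>R X f + X g) \<and>
     (\<forall>f g. X (f * g) = f * X g + g * X f)"

definition vf_bracket :: "('a::{comm_ring_1,real_algebra_1} \<Rightarrow> 'a) \<Rightarrow> ('a \<Rightarrow> 'a) \<Rightarrow> ('a \<Rightarrow> 'a)" where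
  "vf_bracket X Y = (\<lambda>f. X (Y f) - Y (X f))"

definition module_action :: "('a::{comm_ring_1,real_algebra_1} \<Rightarrow> 'e::real_vector \<Rightarrow> 'e) \<Rightarrow> bool" where
  "module_action sm \<longleftrightarrow>
     (\<forall>f g e. sm (f + g) e = sm f e + sm g e) \<and>
     (\<forall>f e1 e2. sm f (e1 + e2) = sm f e1 + sm f e2) \<and>
     (\<forall>f g e. sm (f * g) e = sm f (sm g e)) \<and>
     (\<forall>r e. sm (of_real r) e = r *\<^sub>R e)"

text \<open>C^\<infinity>(M)-linear maps Gamma(E) -> C^\<infinity>(M) (sections of the dual bundle).\<close>
definition module_linear_form ::
  "('a::{comm_ring_1,real_algebra_1} \<Rightarrow> 'e::real_vector \<Rightarrow> 'e) \<Rightarrow> ('e \<Rightarrow> 'a) \<Rightarrow> bool" where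
  "module_linear_form sm \<phi> \<longleftrightarrow> (\<forall>f e1 e2. \<phi> (sm f e1 + e2) = f * \<phi> e1 + \<phi> e2)"

text \<open>Courant vector bundle: pairing symmetric, C^\<infinity>(M)-bilinear, nondegenerate
  (Gamma(E) identified with Gamma(E^*) via the pairing); anchor rho is
  C^\<infinity>(M)-linear with values in vector fields; rho \<circ> rho^* = 0, where
  rho^*(dg) is the section e with \<langle>e,x\<rangle> = rho(x) g for all x.\<close>
definition courant_vector_bundle ::
  "('a::{comm_ring_1,real_algebra_1} \<Rightarrow> 'e::real_vector \<Rightarrow> 'e) \<Rightarrow> ('e \<Rightarrow> 'e \<Rightarrow> 'a) \<Rightarrow> ('e \<Rightarrow> ('a \<Rightarrow> 'a)) \<Rightarrow> bool" where
  "courant_vector_bundle sm pair rho \<longleftrightarrow>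
     module_action sm \<and>
     (\<forall>e1 e2. pair e1 e2 = pair e2 e1) \<and>
     (\<forall>e. module_linear_form sm (pair e)) \<and>
     (\<forall>\<phi>. module_linear_form sm \<phi> \<longrightarrow> (\<exists>!e. \<forall>x. pair e x = \<phi> x)) \<and>
     (\<forall>e. is_derivation (rho e)) \<and>
     (\<forall>f e1 e2. rho (sm f e1 + e2) = (\<lambda>g. f * rho e1 g + rho e2 g)) \<and>
     (\<forall>g e. (\<forall>x. pair e x = rho x g) \<longrightarrow> rho e = (\<lambda>_. 0))"

definition pre_courant_algebroid ::
  "('a::{comm_ring_1,real_algebra_1} \<Rightarrow> 'e::real_vector \<Rightarrow> 'e) \<Rightarrow> ('e \<Rightarrow> 'e \<Rightarrow> 'a) \<Rightarrow> ('e \<Rightarrow> ('a \<Rightarrow> 'a))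
     \<Rightarrow> ('e \<Rightarrow> 'e \<Rightarrow> 'e) \<Rightarrow> bool" where
  "pre_courant_algebroid sm pair rho circ \<longleftrightarrow>
     courant_vector_bundle sm pair rho \<and>
     (\<forall>r e1 e2 e3. circ (r *\<^sub>R e1 + e2) e3 = r *\<^sub>R circ e1 e3 + circ e2 e3) \<and>
     (\<forall>r e1 e2 e3. circ e1 (r *\<^sub>R e2 + e3) = r *\<^sub>R circ e1 e2 + circ e1 e3) \<and>
     (\<forall>e1 e2. rho (circ e1 e2) = vf_bracket (rho e1) (rho e2)) \<and>
     (\<forall>e1 e2. pair (circ e1 e1) e2 = (1/2) *\<^sub>R rho e2 (pair e1 e1)) \<and>
     (\<forall>e1 e2 e3. rho e1 (pair e2 e3) = pair (circ e1 e2) e3 + pair e2 (circ e1 e3))"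

definition jacobiator :: "('e::real_vector \<Rightarrow> 'e \<Rightarrow> 'e) \<Rightarrow> 'e \<Rightarrow> 'e \<Rightarrow> 'e \<Rightarrow> 'e" where
  "jacobiator circ e1 e2 e3 = circ e1 (circ e2 e3) - circ (circ e1 e2) e3 - circ e2 (circ e1 e3)"

text \<open>V1 and V0 are real vector spaces, given as subspaces of ambient real vector
  spaces. The bilinear map l2 : V_i x V_j -> V_{i+j} (i+j \<le> 1) is given by its three
  components l2_00 : V0 x V0 -> V0, l2_01 : V0 x V1 -> V1, l2_10 : V1 x V0 -> V1.\<close>

definition leibniz_2_algebra ::
  "'m::real_vector set \<Rightarrow> 'n::real_vector set \<Rightarrow> ('m \<Rightarrow> 'n)
   \<Rightarrow> ('n \<Rightarrow> 'n \<Rightarrow> 'n) \<Rightarrow> ('n \<Rightarrow> 'm \<Rightarrow> 'm) \<Rightarrow> ('m \<Rightarrow> 'n \<Rightarrow> 'm) \<Rightarrow> ('n \<Rightarrow> 'n \<Rightarrow> 'n \<Rightarrow> 'm) \<Rightarrow> bool" where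
  "leibniz_2_algebra V1 V0 d l2_00 l2_01 l2_10 l3 \<longleftrightarrow>
     subspace V1 \<and> subspace V0 \<and>
     \<comment> \<open>d is a linear map V1 -> V0\<close>
     (\<forall>m\<in>V1. d m \<in> V0) \<and>
     (\<forall>r. \<forall>m\<in>V1. \<forall>n\<in>V1. d (r *\<^sub>R m + n) = r *\<^sub>R d m + d n) \<and>
     \<comment> \<open>l2 well-typed and bilinear\<close>
     (\<forall>x\<in>V0. \<forall>y\<in>V0. l2_00 x y \<in> V0) \<and>
     (\<forall>x\<in>V0. \<forall>m\<in>V1. l2_01 x m \<in> V1) \<and>
     (\<forall>m\<in>V1. \<forall>x\<in>V0. l2_10 m x \<in> V1) \<and>
     (\<forall>r. \<forall>x\<in>V0. \<forall>y\<in>V0. \<forall>z\<in>V0. l2_00 (r *\<^sub>R x + y) z = r *\<^sub>R l2_00 x z + l2_00 y z) \<and>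
     (\<forall>r. \<forall>x\<in>V0. \<forall>y\<in>V0. \<forall>z\<in>V0. l2_00 x (r *\<^sub>R y + z) = r *\<^sub>R l2_00 x y + l2_00 x z) \<and>
     (\<forall>r. \<forall>x\<in>V0. \<forall>y\<in>V0. \<forall>m\<in>V1. l2_01 (r *\<^sub>R x + y) m = r *\<^sub>R l2_01 x m + l2_01 y m) \<and>
     (\<forall>r. \<forall>x\<in>V0. \<forall>m\<in>V1. \<forall>n\<in>V1. l2_01 x (r *\<^sub>R m + n) = r *\<^sub>R l2_01 x m + l2_01 x n) \<and>
     (\<forall>r. \<forall>m\<in>V1. \<forall>n\<in>V1. \<forall>x\<in>V0. l2_10 (r *\<^sub>R m + n) x = r *\<^sub>R l2_10 m x + l2_10 n x) \<and>
     (\<forall>r. \<forall>m\<in>V1. \<forall>x\<in>V0. \<forall>y\<in>V0. l2_10 m (r *\<^sub>R x + y) = r *\<^sub>R l2_10 m x + l2_10 m y) \<and>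
     \<comment> \<open>l3 well-typed and trilinear\<close>
     (\<forall>x\<in>V0. \<forall>y\<in>V0. \<forall>z\<in>V0. l3 x y z \<in> V1) \<and>
     (\<forall>r. \<forall>x\<in>V0. \<forall>x'\<in>V0. \<forall>y\<in>V0. \<forall>z\<in>V0. l3 (r *\<^sub>R x + x') y z = r *\<^sub>R l3 x y z + l3 x' y z) \<and>
     (\<forall>r. \<forall>x\<in>V0. \<forall>y\<in>V0. \<forall>y'\<in>V0. \<forall>z\<in>V0. l3 x (r *\<^sub>R y + y') z = r *\<^sub>R l3 x y z + l3 x y' z) \<and>
     (\<forall>r. \<forall>x\<in>V0. \<forall>y\<in>V0. \<forall>z\<in>V0. \<forall>z'\<in>V0. l3 x y (r *\<^sub>R z + z') = r *\<^sub>R l3 x y z + l3 x y z') \<and>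
     \<comment> \<open>(a1)-(a3)\<close>
     (\<forall>x\<in>V0. \<forall>m\<in>V1. d (l2_01 x m) = l2_00 x (d m)) \<and>
     (\<forall>m\<in>V1. \<forall>x\<in>V0. d (l2_10 m x) = l2_00 (d m) x) \<and>
     (\<forall>m\<in>V1. \<forall>n\<in>V1. l2_01 (d m) n = l2_10 m (d n)) \<and>
     \<comment> \<open>(b1)-(b4)\<close>
     (\<forall>x\<in>V0. \<forall>y\<in>V0. \<forall>z\<in>V0.
        d (l3 x y z) = l2_00 x (l2_00 y z) - l2_00 (l2_00 x y) z - l2_00 y (l2_00 x z)) \<and>
     (\<forall>x\<in>V0. \<forall>y\<in>V0. \<forall>m\<in>V1.
        l3 x y (d m) = l2_01 x (l2_01 y m) - l2_01 (l2_00 x y) m - l2_01 y (l2_01 x m)) \<and>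
     (\<forall>x\<in>V0. \<forall>m\<in>V1. \<forall>y\<in>V0.
        l3 x (d m) y = l2_01 x (l2_10 m y) - l2_10 (l2_01 x m) y - l2_10 m (l2_00 x y)) \<and>
     (\<forall>m\<in>V1. \<forall>x\<in>V0. \<forall>y\<in>V0.
        l3 (d m) x y = l2_10 m (l2_00 x y) - l2_10 (l2_10 m x) y - l2_01 x (l2_10 m y)) \<and>
     \<comment> \<open>(c)\<close>
     (\<forall>w\<in>V0. \<forall>x\<in>V0. \<forall>y\<in>V0. \<forall>z\<in>V0.
        l2_01 w (l3 x y z) - l2_01 x (l3 w y z) + l2_01 y (l3 w x z) + l2_10 (l3 w x y) z
        - l3 (l2_00 w x) y z - l3 x (l2_00 w y) z - l3 x y (l2_00 w z)
        + l3 w (l2_00 x y) z + l3 w y (l2_00 x z) - l3 w x (l2_00 y z) = 0)"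

end

theory Submission
  imports Defs
begin

lemma bil_facts:
  fixes circ :: "'e::real_vector \<Rightarrow> 'e \<Rightarrow> 'e"
  assumes L: "\<forall>r e1 e2 e3. circ (r *\<^sub>R e1 + e2) e3 = r *\<^sub>R circ e1 e3 + circ e2 e3"
    and R: "\<forall>r e1 e2 e3. circ e1 (r *\<^sub>R e2 + e3) = r *\<^sub>R circ e1 e2 + circ e1 e3"
  shows "circ (a + b) c = circ a c + circ b c"
    "circ a (b + c) = circ a b + circ a c"
    "circ (a - b) c = circ a c - circ b c"
    "circ a (b - c) = circ a b - circ a c"
    "circ (r *\<^sub>R a) c = r *\<^sub>R circ a c"
    "circ a (r *\<^sub>R c) = r *\<^sub>R circ a c"
proof -
  have z1: "circ 0 c = 0" for c using L[rule_format, of 1 0 0 c] by simp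
  have z2: "circ a 0 = 0" for a using R[rule_format, of a 1 0 0] by simp
  show 1: "circ (a + b) c = circ a c + circ b c" using L[rule_format, of 1 a b c] by simp
  show 2: "circ a (b + c) = circ a b + circ a c" using R[rule_format, of a 1 b c] by simp
  show "circ (r *\<^sub>R a) c = r *\<^sub>R circ a c" using L[rule_format, of r a 0 c] z1 by simp
  show "circ a (r *\<^sub>R c) = r *\<^sub>R circ a c" using R[rule_format, of a r c 0] z2 by simp
  show "circ (a - b) c = circ a c - circ b c" using L[rule_format, of "-1" b a c] by simp
  show "circ a (b - c) = circ a b - circ a c" using R[rule_format, of a "-1" c b] by simp
qed

lemma der_diff:
  assumes "is_derivation X"
  shows "X (f - g) = X f - X g" "X 0 = 0"
proof -
  have "X ((-1) *\<^sub>R g + f) = (-1) *\<^sub>R X g + X f" using assms unfolding is_derivation_def by blast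
  thus "X (f - g) = X f - X g" by (simp add: algebra_simps)
  have "X (1 *\<^sub>R 0 + 0) = 1 *\<^sub>R X 0 + X 0" using assms unfolding is_derivation_def by blast
  thus "X 0 = 0" by simp
qed

theorem theorem4p1:
  fixes sm :: "'a::{comm_ring_1,real_algebra_1} \<Rightarrow> 'e::real_vector \<Rightarrow> 'e"
    and pair :: "'e \<Rightarrow> 'e \<Rightarrow> 'a"
    and rho :: "'e \<Rightarrow> ('a \<Rightarrow> 'a)"
    and circ :: "'e \<Rightarrow> 'e \<Rightarrow> 'e"
  assumes "pre_courant_algebroid sm pair rho circ"
  shows "leibniz_2_algebra {\<kappa>. rho \<kappa> = (\<lambda>_. 0)} (UNIV :: 'e set) (\<lambda>\<kappa>. \<kappa>)
           circ circ circ (jacobiator circ)"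
proof -
  have cvb: "courant_vector_bundle sm pair rho"
   and L: "\<forall>r e1 e2 e3. circ (r *\<^sub>R e1 + e2) e3 = r *\<^sub>R circ e1 e3 + circ e2 e3"
   and R: "\<forall>r e1 e2 e3. circ e1 (r *\<^sub>R e2 + e3) = r *\<^sub>R circ e1 e2 + circ e1 e3"
   and B: "\<forall>e1 e2. rho (circ e1 e2) = vf_bracket (rho e1) (rho e2)"
    using assms unfolding pre_courant_algebroid_def by auto
  have ma: "module_action sm" and der: "\<And>e. is_derivation (rho e)"
   and rl: "\<And>f e1 e2. rho (sm f e1 + e2) = (\<lambda>g. f * rho e1 g + rho e2 g)"
    using cvb unfolding courant_vector_bundle_def by auto
  have smr: "\<And>r e. sm (of_real r) e = r *\<^sub>R e" using ma unfolding module_action_def by auto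
  have rlin: "rho (r *\<^sub>R e1 + e2) = (\<lambda>g. of_real r * rho e1 g + rho e2 g)" for r e1 e2
    using rl[of "of_real r" e1 e2] smr by simp
  note bf = bil_facts[OF L R]
  have D: "\<And>e f g. rho e (f - g) = rho e f - rho e g" "\<And>e. rho e 0 = 0"
    using der_diff[OF der] by auto
  have sub: "subspace {\<kappa>. rho \<kappa> = (\<lambda>_. 0)}"
    unfolding subspace_def
  proof (intro conjI ballI allI)
    have "rho ((-1) *\<^sub>R 0 + 0) = (\<lambda>g. of_real (-1) * rho 0 g + rho 0 g)" by (rule rlin)
    thus "0 \<in> {\<kappa>. rho \<kappa> = (\<lambda>_. 0)}" by simp
    fix x y assume "x \<in> {\<kappa>. rho \<kappa> = (\<lambda>_. 0)}" "y \<in> {\<kappa>. rho \<kappa> = (\<lambda>_. 0)}"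
    thus "x + y \<in> {\<kappa>. rho \<kappa> = (\<lambda>_. 0)}" using rlin[of 1 x y] by simp
  next
    fix c x assume "x \<in> {\<kappa>. rho \<kappa> = (\<lambda>_. 0)}"
    moreover have "rho 0 = (\<lambda>_. 0)"
      using rlin[of "-1" 0 0] by simp
    ultimately show "c *\<^sub>R x \<in> {\<kappa>. rho \<kappa> = (\<lambda>_. 0)}" using rlin[of c x 0] by simp
  qed
  have jac: "rho (jacobiator circ x y z) = (\<lambda>_. 0)" for x y z
  proof -
    have "rho (jacobiator circ x y z) = (\<lambda>f. rho (circ x (circ y z)) f - rho (circ (circ x y) z) f
        - rho (circ y (circ x z)) f)"
      unfolding jacobiator_def
      using rlin[of "-1" "circ y (circ x z)" "circ x (circ y z) - circ (circ x y) z"]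
            rlin[of "-1" "circ (circ x y) z" "circ x (circ y z)"]
      by (simp add: algebra_simps)
    also have "\<dots> = (\<lambda>_. 0)"
      by (rule ext) (simp add: B vf_bracket_def D)
    finally show ?thesis .
  qed
  show ?thesis
    unfolding leibniz_2_algebra_def
    apply (intro conjI ballI allI)
    apply (simp_all add: sub B vf_bracket_def D jac bf)
    apply (simp_all add: jacobiator_def bf algebra_simps)
    done
qed

end
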